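(* Consider the fixed-design additive regression setting, the estimator $\hat g$ and tuning parameters described in the context, and assume the sub-Gaussian noise condition and the entropy condition hold. Let $\bar g=\sum_{j=1}^p\bar g_j\in\mathcal G$ be arbitrary. Then for any $A_0>1$, with probability at least $1-\epsilon$, $$\tfrac12\|\hat g-g^*\|_n^2+\tfrac12\|\hat g-\bar g\|_n^2+(A_0-1)R_n(\hat g-\bar g)\le \tfrac12\|\bar g-g^*\|_n^2+2A_0R_n(\bar g),$$ where $R_n(\hat g-\bar g)=\sum_j\{\rho_{nj}\|\hat g_j-\bar g_j\|_{F,j}+\lambda_{nj}\|\hat g_j-\bar g_j\|_n\}$.
   Context: Data: $(Y_i,X_i)$, $i=1,\dots,n$, with $Y_i\in\mathbb R$, $X_i\in\mathbb R^d$, $Y_i=g^*(X_i)+\varepsilon_i$, where $g^*$ is an arbitrary (not necessarily additive) function. Fixed design: $X_1,\dots,X_n$ are deterministic and probabilities refer to the noise. For $j=1,\dots,p$, $x^{(j)}$ is a fixed sub-vector of coordinates of $x$, $\mathcal G_j$ is a vector space of real functions of $x^{(j)}$ with a semi-norm $\|\cdot\|_{F,j}$, and $\mathcal G=\{g(x)=\sum_{j=1}^pg_j(x^{(j)}):g_j\in\mathcal G_j\}$; every $g\in\mathcal G$ comes with a decomposition $g=\sum_jg_j$ to which component-wise quantities refer. $\|f\|_n^2=n^{-1}\sum_if(X_i)^2$, $\|Y-g\|_n^2=n^{-1}\sum_i\{Y_i-g(X_i)\}^2$, $\langle\varepsilon,f\rangle_n=n^{-1}\sum_i\varepsilon_if(X_i)$.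 $H(u,\mathcal F,\|\cdot\|)$ is the log covering number at radius $u$. Sub-Gaussian noise condition: $\varepsilon_i$ independent, mean zero, $\max_iD_0E\exp(\varepsilon_i^2/D_0)\le D_1$. $C_1=C_1(D_0,D_1)>0$ is a constant depending only on $(D_0,D_1)$ such that for every $\delta>0$, every class $\mathcal F$ with $\sup_{\mathcal F}\|f\|_n\le\delta$ and every $\psi\ge\int_0^\delta H^{1/2}(u,\mathcal F,\|\cdot\|_n)du$, $P\{\sup_{\mathcal F}|\langle\varepsilon,f\rangle_n|/C_1>n^{-1/2}\psi+\delta\sqrt{t/n}\}\le e^{-t}$ for all $t>0$. Entropy condition: with $\mathcal G_j(\delta)=\{f\in\mathcal G_j:\|f\|_{F,j}+\|f\|_n/\delta\le1\}$, $\psi_{nj}(\delta)\ge\int_0^\delta H^{1/2}(u,\mathcal G_j(\delta),\|\cdot\|_n)du$ for $0<\delta\le1$. Tuning and estimator: $0<\epsilon<1$, $0<w_{nj}\le1$, $\gamma_{nj}=n^{-1/2}\psi_{nj}(w_{nj})/w_{nj}$, $\lambda_{nj}=C_1\{\gamma_{nj}+\sqrt{\log(p/\epsilon)/n}\}$, $\rho_{nj}=\lambda_{nj}w_{nj}$, $R_n(g)=\sum_j(\rho_{nj}\|g_j\|_{F,j}+\lambda_{nj}\|g_j\|_n)$; $\hat g=\sum_j\hat g_j$ minimizes $K_n(g)=\|Y-g\|_n^2/2+A_0R_n(g)$ over $g\in\mathcal G$ and decompositions. *)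

theory Defs
  imports "HOL-Probability.Probability"
begin

definition emp_norm :: "nat \<Rightarrow> (nat \<Rightarrow> 'x) \<Rightarrow> ('x \<Rightarrow> real) \<Rightarrow> real" where
  "emp_norm n X f = sqrt ((\<Sum>i<n. (f (X i))\<^sup>2) / real n)"

definition emp_dist :: "nat \<Rightarrow> (nat \<Rightarrow> 'x) \<Rightarrow> ('x \<Rightarrow> real) \<Rightarrow> ('x \<Rightarrow> real) \<Rightarrow> real" where
  "emp_dist n X f g = emp_norm n X (\<lambda>x. f x - g x)"

definition emp_inner :: "nat \<Rightarrow> (nat \<Rightarrow> 'x) \<Rightarrow> (nat \<Rightarrow> real) \<Rightarrow> ('x \<Rightarrow> real) \<Rightarrow> real" where
  "emp_inner n X v f = (\<Sum>i<n. v i * f (X i)) / real n"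

definition emp_loss :: "nat \<Rightarrow> (nat \<Rightarrow> 'x) \<Rightarrow> (nat \<Rightarrow> real) \<Rightarrow> ('x \<Rightarrow> real) \<Rightarrow> real" where
  "emp_loss n X y g = (\<Sum>i<n. (y i - g (X i))\<^sup>2) / real n"

text \<open>Covering number at radius u (closed balls, arbitrary centers), infinite if no
  finite cover exists; square root of the log covering number; entropy integral.\<close>

definition covering_number ::
  "(('x \<Rightarrow> real) \<Rightarrow> ('x \<Rightarrow> real) \<Rightarrow> real) \<Rightarrow> real \<Rightarrow> ('x \<Rightarrow> real) set \<Rightarrow> enat" where
  "covering_number d u F =
     Inf {enat (card C) | C. finite C \<and> (\<forall>f\<in>F. \<exists>c\<in>C. d f c \<le> u)}"

definition sqrt_entropy ::
  "(('x \<Rightarrow> real) \<Rightarrow> ('x \<Rightarrow> real) \<Rightarrow> real) \<Rightarrow> real \<Rightarrow> ('x \<Rightarrow> real) set \<Rightarrow> ennreal" where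
  "sqrt_entropy d u F =
     (case covering_number d u F of
        enat k \<Rightarrow> ennreal (sqrt (ln (max 1 (real k))))
      | \<infinity> \<Rightarrow> \<infinity>)"

definition entropy_integral ::
  "(('x \<Rightarrow> real) \<Rightarrow> ('x \<Rightarrow> real) \<Rightarrow> real) \<Rightarrow> real \<Rightarrow> ('x \<Rightarrow> real) set \<Rightarrow> ennreal" where
  "entropy_integral d \<delta> F =
     (\<integral>\<^sup>+ u. indicator {0<..\<delta>} u * sqrt_entropy d u F \<partial>lborel)"

text \<open>The real number psi dominates the (extended, nonnegative) entropy integral I:
  this is the meaning of "psi >= integral" for real psi.\<close>
definition real_ge_integral :: "real \<Rightarrow> ennreal \<Rightarrow> bool" where
  "real_ge_integral \<psi> I \<longleftrightarrow> 0 \<le> \<psi> \<and> I \<le> ennreal \<psi>"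

definition sub_gaussian_concentration ::
  "'w measure \<Rightarrow> nat \<Rightarrow> (nat \<Rightarrow> 'x) \<Rightarrow> (nat \<Rightarrow> 'w \<Rightarrow> real) \<Rightarrow> real \<Rightarrow> bool" where
  "sub_gaussian_concentration M n X e C1 \<longleftrightarrow>
     (\<forall>\<delta>>0. \<forall>F. (\<forall>f\<in>F. emp_norm n X f \<le> \<delta>) \<longrightarrow>
        (\<forall>\<psi>. real_ge_integral \<psi> (entropy_integral (emp_dist n X) \<delta> F) \<longrightarrow>
          (\<forall>t>0. measure M {\<omega> \<in> space M. \<exists>f\<in>F.
                 \<bar>emp_inner n X (\<lambda>i. e i \<omega>) f\<bar> / C1 > \<psi> / sqrt (real n) + \<delta> * sqrt (t / real n)}
               \<le> exp (- t))))"

definition fun_subspace :: "('x \<Rightarrow> real) set \<Rightarrow> bool" where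
  "fun_subspace G \<longleftrightarrow> (\<lambda>_. 0) \<in> G \<and> (\<forall>f\<in>G. \<forall>g\<in>G. (\<lambda>x. f x + g x) \<in> G)
     \<and> (\<forall>c. \<forall>f\<in>G. (\<lambda>x. c * f x) \<in> G)"

definition seminorm_on :: "('x \<Rightarrow> real) set \<Rightarrow> (('x \<Rightarrow> real) \<Rightarrow> real) \<Rightarrow> bool" where
  "seminorm_on G N \<longleftrightarrow> (\<forall>f\<in>G. 0 \<le> N f) \<and> (\<forall>c. \<forall>f\<in>G. N (\<lambda>x. c * f x) = \<bar>c\<bar> * N f)
     \<and> (\<forall>f\<in>G. \<forall>g\<in>G. N (\<lambda>x. f x + g x) \<le> N f + N g)"

definition depends_only_on :: "'d set \<Rightarrow> (real ^ 'd \<Rightarrow> real) \<Rightarrow> bool" where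
  "depends_only_on S f \<longleftrightarrow> (\<forall>x y. (\<forall>k\<in>S. x $ k = y $ k) \<longrightarrow> f x = f y)"

definition local_class ::
  "nat \<Rightarrow> (nat \<Rightarrow> 'x) \<Rightarrow> ('x \<Rightarrow> real) set \<Rightarrow> (('x \<Rightarrow> real) \<Rightarrow> real) \<Rightarrow> real \<Rightarrow> ('x \<Rightarrow> real) set" where
  "local_class n X G N \<delta> = {f \<in> G. N f + emp_norm n X f / \<delta> \<le> 1}"

definition tune_lambda :: "nat \<Rightarrow> nat \<Rightarrow> real \<Rightarrow> real \<Rightarrow> (nat \<Rightarrow> real \<Rightarrow> real) \<Rightarrow> (nat \<Rightarrow> real) \<Rightarrow> nat \<Rightarrow> real" where
  "tune_lambda n p eps C1 psi w j =
     C1 * (psi j (w j) / (sqrt (real n) * w j) + sqrt (ln (real p / eps) / real n))"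

definition tune_rho :: "nat \<Rightarrow> nat \<Rightarrow> real \<Rightarrow> real \<Rightarrow> (nat \<Rightarrow> real \<Rightarrow> real) \<Rightarrow> (nat \<Rightarrow> real) \<Rightarrow> nat \<Rightarrow> real" where
  "tune_rho n p eps C1 psi w j = tune_lambda n p eps C1 psi w j * w j"

definition penalty ::
  "nat \<Rightarrow> (nat \<Rightarrow> 'x) \<Rightarrow> nat \<Rightarrow> (nat \<Rightarrow> ('x \<Rightarrow> real) \<Rightarrow> real) \<Rightarrow> (nat \<Rightarrow> real) \<Rightarrow> (nat \<Rightarrow> real)
    \<Rightarrow> (nat \<Rightarrow> 'x \<Rightarrow> real) \<Rightarrow> real" where
  "penalty n X p Fn lam rho gs = (\<Sum>j<p. rho j * Fn j (gs j) + lam j * emp_norm n X (gs j))"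

definition add_fun :: "nat \<Rightarrow> (nat \<Rightarrow> 'x \<Rightarrow> real) \<Rightarrow> 'x \<Rightarrow> real" where
  "add_fun p gs = (\<lambda>x. \<Sum>j<p. gs j x)"

end

theory Submission
  imports Defs "HOL-Analysis.Function_Topology"
begin

lemma meas_event:
  fixes M :: "'w measure" and e :: "nat \<Rightarrow> 'w \<Rightarrow> real" and F :: "('x \<Rightarrow> real) set"
    and X :: "nat \<Rightarrow> 'x"
  assumes em: "\<forall>i<n. e i \<in> borel_measurable M" and nC: "n > 0" "C \<noteq> 0"
  shows "{\<omega> \<in> space M. \<exists>f\<in>F. \<bar>(\<Sum>i<n. e i \<omega> * f (X i)) / real n\<bar> / C > c} \<in> sets M"
proof -
  define U where "U f = {u :: nat \<Rightarrow> real. \<bar>(\<Sum>i<n. u i * f (X i)) / real n\<bar> / C > c}" for f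
  have op: "open (U f)" for f
  proof -
    have "continuous_on UNIV (\<lambda>u :: nat \<Rightarrow> real. \<bar>(\<Sum>i<n. u i * f (X i)) / real n\<bar> / C)"
      by (intro continuous_intros continuous_on_product_coordinates) (use nC in auto)
    then show ?thesis unfolding U_def
      by (intro open_Collect_less) (auto intro: continuous_intros simp: continuous_on_eq_continuous_at)
  qed
  obtain FF where FF: "FF \<subseteq> U ` F" "countable FF" "\<Union>FF = \<Union>(U ` F)"
    using Lindelof[of "U ` F"] op by blast
  then obtain F' where F': "countable F'" "F' \<subseteq> F" "FF = U ` F'"
    using countable_subset_image[of FF U F] by blast
  have eq: "{\<omega> \<in> space M. \<exists>f\<in>F. \<bar>(\<Sum>i<n. e i \<omega> * f (X i)) / real n\<bar> / C > c}
      = (\<Union>f\<in>F'. {\<omega> \<in> space M. \<bar>(\<Sum>i<n. e i \<omega> * f (X i)) / real n\<bar> / C > c})"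
  proof -
    have "(\<exists>f\<in>F. (\<lambda>i. e i \<omega>) \<in> U f) \<longleftrightarrow> (\<exists>f\<in>F'. (\<lambda>i. e i \<omega>) \<in> U f)" for \<omega>
      using FF(3) F'(3) by blast
    then show ?thesis unfolding U_def by auto
  qed
  show ?thesis unfolding eq
    by (intro sets.countable_UN'' F'(1) ; measurable) (use em in auto)
qed


lemma emp_norm_sq: "(emp_norm n X f)\<^sup>2 = (\<Sum>i<n. (f (X i))\<^sup>2) / real n"
  unfolding emp_norm_def by (simp add: sum_nonneg)

lemma emp_norm_nonneg: "0 \<le> emp_norm n X f"
  unfolding emp_norm_def by (simp add: sum_nonneg)

lemma emp_norm_L2: "emp_norm n X f = L2_set (\<lambda>i. f (X i)) {..<n} / sqrt (real n)"
  unfolding emp_norm_def L2_set_def by (simp add: real_sqrt_divide)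

lemma emp_norm_triangle: "emp_norm n X (\<lambda>x. f x + g x) \<le> emp_norm n X f + emp_norm n X g"
proof -
  have "L2_set (\<lambda>i. f (X i) + g (X i)) {..<n} \<le> L2_set (\<lambda>i. f (X i)) {..<n} + L2_set (\<lambda>i. g (X i)) {..<n}"
    by (rule L2_set_triangle_ineq)
  then show ?thesis unfolding emp_norm_L2
    by (simp add: add_divide_distrib[symmetric] divide_right_mono)
qed

lemma emp_norm_scale: "emp_norm n X (\<lambda>x. c * f x) = \<bar>c\<bar> * emp_norm n X f"
proof -
  have "(\<Sum>i<n. (c * f (X i))\<^sup>2) = c\<^sup>2 * (\<Sum>i<n. (f (X i))\<^sup>2)"
    by (simp add: power_mult_distrib sum_distrib_left)
  then have e: "(\<Sum>i<n. (c * f (X i))\<^sup>2) / real n = c\<^sup>2 * ((\<Sum>i<n. (f (X i))\<^sup>2) / real n)"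
    by simp
  show ?thesis unfolding emp_norm_def e real_sqrt_mult by simp
qed

lemma emp_norm_zero:
  assumes "emp_norm n X f = 0" "i < n"
  shows "f (X i) = 0"
proof -
  have n: "real n > 0" using assms by simp
  have "(\<Sum>i<n. (f (X i))\<^sup>2) / real n = 0" using emp_norm_sq[of n X f] assms by simp
  then have "(\<Sum>i<n. (f (X i))\<^sup>2) = 0" using n by simp
  then have "\<forall>i\<in>{..<n}. (f (X i))\<^sup>2 = 0" by (subst (asm) sum_nonneg_eq_0_iff) auto
  then show ?thesis using assms by simp
qed

lemma sub_add: "fun_subspace G \<Longrightarrow> f \<in> G \<Longrightarrow> g \<in> G \<Longrightarrow> (\<lambda>x. f x + g x) \<in> G"
  unfolding fun_subspace_def by blast
lemma sub_scale: "fun_subspace G \<Longrightarrow> f \<in> G \<Longrightarrow> (\<lambda>x. c * f x) \<in> G"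
  unfolding fun_subspace_def by blast
lemma sn_add: "seminorm_on G N \<Longrightarrow> f \<in> G \<Longrightarrow> g \<in> G \<Longrightarrow> N (\<lambda>x. f x + g x) \<le> N f + N g"
  unfolding seminorm_on_def by blast
lemma sn_scale: "seminorm_on G N \<Longrightarrow> f \<in> G \<Longrightarrow> N (\<lambda>x. c * f x) = \<bar>c\<bar> * N f"
  unfolding seminorm_on_def by blast
lemma sn_nonneg: "seminorm_on G N \<Longrightarrow> f \<in> G \<Longrightarrow> 0 \<le> N f"
  unfolding seminorm_on_def by blast

lemma sub_diff: "fun_subspace G \<Longrightarrow> f \<in> G \<Longrightarrow> g \<in> G \<Longrightarrow> (\<lambda>x. f x - g x) \<in> G"
  using sub_add[of G f "\<lambda>x. (-1) * g x"] sub_scale[of G g "-1"] by simp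

lemma sub_lin: "fun_subspace G \<Longrightarrow> f \<in> G \<Longrightarrow> g \<in> G \<Longrightarrow> (\<lambda>x. a * f x + b * g x) \<in> G"
  using sub_add[of G "\<lambda>x. a * f x" "\<lambda>x. b * g x"] sub_scale[of G g b] sub_scale[of G f a] by simp

lemma sn_diff: "fun_subspace G \<Longrightarrow> seminorm_on G N \<Longrightarrow> f \<in> G \<Longrightarrow> g \<in> G \<Longrightarrow> N (\<lambda>x. f x - g x) \<le> N f + N g"
  using sn_add[of G N f "\<lambda>x. (-1) * g x"] sub_scale[of G g "-1"] sn_scale[of G N g "-1"] by simp

lemma sn_lin: "fun_subspace G \<Longrightarrow> seminorm_on G N \<Longrightarrow> f \<in> G \<Longrightarrow> g \<in> G \<Longrightarrow>
   N (\<lambda>x. a * f x + b * g x) \<le> \<bar>a\<bar> * N f + \<bar>b\<bar> * N g"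
  using sn_add[of G N "\<lambda>x. a * f x" "\<lambda>x. b * g x"] sub_scale[of G g b] sub_scale[of G f a]
    sn_scale[of G N g b] sn_scale[of G N f a] by simp

lemma en_diff: "emp_norm n X (\<lambda>x. f x - g x) \<le> emp_norm n X f + emp_norm n X g"
  using emp_norm_triangle[of n X f "\<lambda>x. (-1) * g x"] emp_norm_scale[of n X "-1" g] by simp

lemma en_lin: "emp_norm n X (\<lambda>x. a * f x + b * g x) \<le> \<bar>a\<bar> * emp_norm n X f + \<bar>b\<bar> * emp_norm n X g"
  using emp_norm_triangle[of n X "\<lambda>x. a * f x" "\<lambda>x. b * g x"] emp_norm_scale[of n X a f]
    emp_norm_scale[of n X b g] by simp

lemma rhs_alg: "r > 0 \<Longrightarrow> (w::real) > 0 \<Longrightarrow>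
  C1 * (P / (r * w) + q) * w * Nf + C1 * (P / (r * w) + q) * nf = (Nf + nf / w) * (C1 * (P / r + w * q))"
  by (simp add: field_simps)

lemma noise_bound:
  assumes n: "n > 0" and C: "C1 > 0" and w: "w > 0" and G: "fun_subspace G" "seminorm_on G N"
    and f: "f \<in> G"
    and H: "\<forall>h\<in>local_class n X G N w. \<bar>emp_inner n X v h\<bar> / C1 \<le> P / sqrt (real n) + w * sqrt (t / real n)"
  shows "\<bar>emp_inner n X v f\<bar> \<le> (C1 * (P / (sqrt (real n) * w) + sqrt (t / real n))) * w * N f
          + C1 * (P / (sqrt (real n) * w) + sqrt (t / real n)) * emp_norm n X f"
proof -
  define s where "s = N f + emp_norm n X f / w"
  have Nf: "N f \<ge> 0" using G f unfolding seminorm_on_def by blast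
  have nf: "emp_norm n X f \<ge> 0" by (rule emp_norm_nonneg)
  have rhs: "(C1 * (P / (sqrt (real n) * w) + sqrt (t / real n))) * w * N f
          + C1 * (P / (sqrt (real n) * w) + sqrt (t / real n)) * emp_norm n X f
       = s * (C1 * (P / sqrt (real n) + w * sqrt (t / real n)))"
    unfolding s_def using w n by (intro rhs_alg) auto
  show ?thesis
  proof (cases "s = 0")
    case True
    have q: "emp_norm n X f / w \<ge> 0" using nf w by simp
    then have "emp_norm n X f / w = 0" using True Nf unfolding s_def by linarith
    then have "emp_norm n X f = 0" using w by simp
    then have "\<forall>i<n. f (X i) = 0" using emp_norm_zero by blast
    then have "emp_inner n X v f = 0" unfolding emp_inner_def by simp
    then show ?thesis unfolding rhs True by simp
  next
    case False
    have q: "emp_norm n X f / w \<ge> 0" using nf w by simp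
    then have sp: "s > 0" using Nf False unfolding s_def by linarith
    define h where "h = (\<lambda>x. (1 / s) * f x)"
    have hG: "h \<in> G" using G f unfolding h_def fun_subspace_def by blast
    have Nh: "N h = N f / s" using sn_scale[OF G(2) f, of "1/s"] sp unfolding h_def by simp
    have nh: "emp_norm n X h = emp_norm n X f / s" using sp unfolding h_def emp_norm_scale by simp
    have "N h + emp_norm n X h / w = (N f + emp_norm n X f / w) / s" unfolding Nh nh
      by (simp add: add_divide_distrib)
    also have "\<dots> = s / s" unfolding s_def ..
    finally have "N h + emp_norm n X h / w = s / s" .
    then have "h \<in> local_class n X G N w" unfolding local_class_def using hG sp by simp
    with H have b: "\<bar>emp_inner n X v h\<bar> / C1 \<le> P / sqrt (real n) + w * sqrt (t / real n)" by blast
    have ih: "emp_inner n X v h = emp_inner n X v f / s"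
      unfolding emp_inner_def h_def by (simp add: sum_divide_distrib[symmetric] sum_distrib_left field_simps)
    have "\<bar>emp_inner n X v f\<bar> = s * C1 * (\<bar>emp_inner n X v h\<bar> / C1)"
      using sp C unfolding ih by (simp add: abs_div)
    also have "\<dots> \<le> s * C1 * (P / sqrt (real n) + w * sqrt (t / real n))"
      using b sp C by (intro mult_left_mono) auto
    finally show ?thesis unfolding rhs by (simp add: mult.assoc)
  qed
qed



lemma quad_id:
  fixes y a b :: "nat \<Rightarrow> real"
  shows "(\<Sum>i<n. (y i - (a i + t * (b i - a i)))\<^sup>2) =
     (\<Sum>i<n. (y i - a i)\<^sup>2) + 2 * t * (\<Sum>i<n. (a i - y i) * (b i - a i)) + t\<^sup>2 * (\<Sum>i<n. (b i - a i)\<^sup>2)"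
proof -
  have "\<And>i. (y i - (a i + t * (b i - a i)))\<^sup>2 = (y i - a i)\<^sup>2 + 2 * t * ((a i - y i) * (b i - a i)) + t\<^sup>2 * (b i - a i)\<^sup>2"
    by (simp add: power2_eq_square algebra_simps)
  then show ?thesis by (simp add: sum.distrib sum_distrib_left)
qed

lemma limit_arg:
  fixes q c :: real
  assumes c: "c \<ge> 0" and H: "\<And>t. 0 < t \<Longrightarrow> t \<le> 1 \<Longrightarrow> 0 \<le> q + t * c"
  shows "0 \<le> q"
proof (rule ccontr)
  assume "\<not> 0 \<le> q"
  then have q: "q < 0" by simp
  define t where "t = min 1 (- q / (2 * (c + 1)))"
  have "- q / (2 * (c + 1)) > 0" using q c by (intro divide_pos_pos) auto
  then have t0: "0 < t" "t \<le> 1" unfolding t_def by auto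
  have "t * c \<le> (- q / (2 * (c + 1))) * c" using c unfolding t_def by (intro mult_right_mono) auto
  also have "\<dots> < - q"
  proof -
    have "c * q \<le> 0" using q c by (simp add: mult_nonneg_nonpos)
    then show ?thesis using q c by (simp add: field_simps)
  qed
  finally show False using H[OF t0] by linarith
qed

lemma add_fun_diff: "add_fun p f x - add_fun p g x = (\<Sum>j<p. f j x - g j x)"
  unfolding add_fun_def by (simp add: sum_subtractf)

lemma det:
  fixes X :: "nat \<Rightarrow> 'x" and gh gbar :: "nat \<Rightarrow> 'x \<Rightarrow> real" and ev :: "nat \<Rightarrow> real"
  assumes n: "n > 0"
    and G: "\<forall>j<p. fun_subspace (G j) \<and> seminorm_on (G j) (Fn j)"
    and gbar: "\<forall>j<p. gbar j \<in> G j"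
    and gh: "\<forall>j<p. gh j \<in> G j"
    and lam: "\<forall>j<p. lam j \<ge> 0" and rho: "\<forall>j<p. rho j \<ge> 0"
    and A0: "A0 > 1"
    and noise: "\<forall>j<p. \<forall>f\<in>G j. \<bar>emp_inner n X ev f\<bar> \<le> rho j * Fn j f + lam j * emp_norm n X f"
    and Ydef: "Y = (\<lambda>i. gstar (X i) + ev i)"
    and Kdef: "K = (\<lambda>gs. emp_loss n X Y (add_fun p gs) / 2 + A0 * penalty n X p Fn lam rho gs)"
    and opt: "\<forall>gs. (\<forall>j<p. gs j \<in> G j) \<longrightarrow> K gh \<le> K gs"
  shows "(emp_dist n X (add_fun p gh) gstar)\<^sup>2 / 2
         + (emp_dist n X (add_fun p gh) (add_fun p gbar))\<^sup>2 / 2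
         + (A0 - 1) * penalty n X p Fn lam rho (\<lambda>j x. gh j x - gbar j x)
         \<le> (emp_dist n X (add_fun p gbar) gstar)\<^sup>2 / 2
           + 2 * A0 * penalty n X p Fn lam rho gbar"
proof -
  define a where "a i = add_fun p gh (X i)" for i
  define b where "b i = add_fun p gbar (X i)" for i
  define s where "s i = gstar (X i)" for i
  define y where "y i = Y i" for i
  have y: "y i = s i + ev i" for i unfolding y_def Ydef s_def by simp
  define Rh where "Rh = penalty n X p Fn lam rho gh"
  define Rb where "Rb = penalty n X p Fn lam rho gbar"
  define RD where "RD = penalty n X p Fn lam rho (\<lambda>j x. gh j x - gbar j x)"
  define D where "D = (\<Sum>i<n. (a i - y i) * (b i - a i)) / real n"
  define D2 where "D2 = (\<Sum>i<n. (b i - a i)\<^sup>2) / real n"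
  define Lh where "Lh = (\<Sum>i<n. (y i - a i)\<^sup>2) / real n"
  have nr: "real n > 0" using n by simp
  have fo: "0 \<le> D + A0 * (Rb - Rh) + t * (D2 / 2)" if t: "0 < t" "t \<le> 1" for t
  proof -
    define gt where "gt j x = (1 - t) * gh j x + t * gbar j x" for j x
    have gtG: "\<forall>j<p. gt j \<in> G j"
      using G gh gbar unfolding gt_def by (auto intro!: sub_lin)
    have "K gh \<le> K gt" using opt gtG by blast
    moreover have "add_fun p gt (X i) = a i + t * (b i - a i)" for i
      unfolding gt_def a_def b_def add_fun_def
      by (simp add: sum.distrib sum_distrib_left algebra_simps sum_subtractf)
    then have "emp_loss n X Y (add_fun p gt) = Lh + 2 * t * D + t\<^sup>2 * D2"
      unfolding emp_loss_def Lh_def D_def D2_def y_def[symmetric] using quad_id[of y a t b n]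
      by (simp add: add_divide_distrib)
    moreover have "emp_loss n X Y (add_fun p gh) = Lh"
      unfolding emp_loss_def Lh_def y_def a_def ..
    moreover have "penalty n X p Fn lam rho gt \<le> (1 - t) * Rh + t * Rb"
    proof -
      have "penalty n X p Fn lam rho gt \<le> (\<Sum>j<p. (1 - t) * (rho j * Fn j (gh j) + lam j * emp_norm n X (gh j))
                 + t * (rho j * Fn j (gbar j) + lam j * emp_norm n X (gbar j)))"
        unfolding penalty_def
      proof (rule sum_mono)
        fix j assume "j \<in> {..<p}"
        then have j: "j < p" by simp
        have F: "Fn j (gt j) \<le> (1 - t) * Fn j (gh j) + t * Fn j (gbar j)"
          using sn_lin[of "G j" "Fn j" "gh j" "gbar j" "1 - t" t] G gh gbar j t
          unfolding gt_def by auto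
        have N: "emp_norm n X (gt j) \<le> (1 - t) * emp_norm n X (gh j) + t * emp_norm n X (gbar j)"
          using en_lin[of n X "1 - t" "gh j" t "gbar j"] t unfolding gt_def by auto
        have "rho j * Fn j (gt j) \<le> rho j * ((1 - t) * Fn j (gh j) + t * Fn j (gbar j))"
          using F rho j by (intro mult_left_mono) auto
        moreover have "lam j * emp_norm n X (gt j) \<le> lam j * ((1 - t) * emp_norm n X (gh j) + t * emp_norm n X (gbar j))"
          using N lam j by (intro mult_left_mono) auto
        moreover have "rho j * ((1 - t) * Fn j (gh j) + t * Fn j (gbar j)) + lam j * ((1 - t) * emp_norm n X (gh j) + t * emp_norm n X (gbar j))
           = (1 - t) * (rho j * Fn j (gh j) + lam j * emp_norm n X (gh j))
                 + t * (rho j * Fn j (gbar j) + lam j * emp_norm n X (gbar j))"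
          by (simp add: algebra_simps)
        ultimately show "rho j * Fn j (gt j) + lam j * emp_norm n X (gt j) \<le> (1 - t) * (rho j * Fn j (gh j) + lam j * emp_norm n X (gh j))
                 + t * (rho j * Fn j (gbar j) + lam j * emp_norm n X (gbar j))" by linarith
      qed
      also have "\<dots> = (1 - t) * Rh + t * Rb"
        unfolding Rh_def Rb_def penalty_def by (simp only: sum_distrib_left sum.distrib[symmetric])
      finally show ?thesis .
    qed
    ultimately have "Lh / 2 + A0 * Rh \<le> (Lh + 2 * t * D + t\<^sup>2 * D2) / 2 + A0 * ((1 - t) * Rh + t * Rb)"
      unfolding Kdef Rh_def using A0 by (smt (verit, best) mult_left_mono)
    then have "0 \<le> t * (D + A0 * (Rb - Rh) + t * (D2 / 2))"
      by (simp add: algebra_simps power2_eq_square add_divide_distrib)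
    then show ?thesis using t by (simp add: zero_le_mult_iff)
  qed
  have D2nn: "D2 \<ge> 0" unfolding D2_def using nr by (simp add: sum_nonneg)
  have foc: "0 \<le> D + A0 * (Rb - Rh)"
    using limit_arg[of "D2 / 2" "D + A0 * (Rb - Rh)"] fo D2nn by (simp add: mult.commute)
  define E where "E = (\<Sum>i<n. ev i * (a i - b i)) / real n"
  have E: "E = (\<Sum>j<p. emp_inner n X ev (\<lambda>x. gh j x - gbar j x))"
    unfolding E_def emp_inner_def a_def b_def add_fun_diff
    by (simp add: sum_distrib_left sum_divide_distrib[symmetric] sum.swap[of _ "{..<p}"])
  have ERD: "E \<le> RD"
  proof -
    have "E \<le> (\<Sum>j<p. rho j * Fn j (gh j - gbar j) + lam j * emp_norm n X (\<lambda>x. gh j x - gbar j x))"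
      unfolding E
    proof (rule sum_mono)
      fix j assume "j \<in> {..<p}"
      then have j: "j < p" by simp
      have "(\<lambda>x. gh j x - gbar j x) \<in> G j" using G gh gbar j by (auto intro: sub_diff)
      then show "emp_inner n X ev (\<lambda>x. gh j x - gbar j x) \<le> rho j * Fn j (gh j - gbar j) + lam j * emp_norm n X (\<lambda>x. gh j x - gbar j x)"
        using noise j abs_ge_self[of "emp_inner n X ev (\<lambda>x. gh j x - gbar j x)"] unfolding fun_diff_def
        by (meson order_trans)
    qed
    then show ?thesis unfolding RD_def penalty_def by (simp add: fun_diff_def)
  qed
  have RDle: "RD \<le> Rh + Rb"
  proof -
    have "RD \<le> (\<Sum>j<p. (rho j * Fn j (gh j) + lam j * emp_norm n X (gh j)) + (rho j * Fn j (gbar j) + lam j * emp_norm n X (gbar j)))"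
      unfolding RD_def penalty_def
    proof (rule sum_mono)
      fix j assume "j \<in> {..<p}"
      then have j: "j < p" by simp
      have F: "Fn j (\<lambda>x. gh j x - gbar j x) \<le> Fn j (gh j) + Fn j (gbar j)"
        using G gh gbar j by (auto intro: sn_diff)
      have N: "emp_norm n X (\<lambda>x. gh j x - gbar j x) \<le> emp_norm n X (gh j) + emp_norm n X (gbar j)"
        by (rule en_diff)
      have "rho j * Fn j (\<lambda>x. gh j x - gbar j x) \<le> rho j * (Fn j (gh j) + Fn j (gbar j))"
        using F rho j by (intro mult_left_mono) auto
      moreover have "lam j * emp_norm n X (\<lambda>x. gh j x - gbar j x) \<le> lam j * (emp_norm n X (gh j) + emp_norm n X (gbar j))"
        using N lam j by (intro mult_left_mono) auto
      ultimately show "rho j * Fn j (\<lambda>x. gh j x - gbar j x) + lam j * emp_norm n X (\<lambda>x. gh j x - gbar j x)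
          \<le> (rho j * Fn j (gh j) + lam j * emp_norm n X (gh j)) + (rho j * Fn j (gbar j) + lam j * emp_norm n X (gbar j))"
        by (simp add: algebra_simps)
    qed
    then show ?thesis unfolding Rh_def Rb_def penalty_def by (simp add: sum.distrib)
  qed
  define Sas where "Sas = (\<Sum>i<n. (a i - s i)\<^sup>2) / real n"
  define Sab where "Sab = (\<Sum>i<n. (a i - b i)\<^sup>2) / real n"
  define Sbs where "Sbs = (\<Sum>i<n. (b i - s i)\<^sup>2) / real n"
  have pw: "(b i - s i)\<^sup>2 = (a i - s i)\<^sup>2 + (a i - b i)\<^sup>2 + 2 * ((a i - y i) * (b i - a i)) - 2 * (ev i * (a i - b i))" for i
    unfolding y by (simp add: power2_eq_square algebra_simps)
  have "(\<Sum>i<n. (b i - s i)\<^sup>2) = (\<Sum>i<n. (a i - s i)\<^sup>2) + (\<Sum>i<n. (a i - b i)\<^sup>2)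
      + 2 * (\<Sum>i<n. (a i - y i) * (b i - a i)) - 2 * (\<Sum>i<n. ev i * (a i - b i))"
    unfolding pw by (simp add: sum.distrib sum_subtractf sum_distrib_left)
  then have iden: "Sbs = Sas + Sab + 2 * D - 2 * E"
    unfolding Sbs_def Sas_def Sab_def D_def E_def by (simp add: add_divide_distrib diff_divide_distrib)
  have d1: "(emp_dist n X (add_fun p gh) gstar)\<^sup>2 = Sas"
    unfolding emp_dist_def emp_norm_sq Sas_def a_def s_def ..
  have d2: "(emp_dist n X (add_fun p gh) (add_fun p gbar))\<^sup>2 = Sab"
    unfolding emp_dist_def emp_norm_sq Sab_def a_def b_def ..
  have d3: "(emp_dist n X (add_fun p gbar) gstar)\<^sup>2 = Sbs"
    unfolding emp_dist_def emp_norm_sq Sbs_def b_def s_def ..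
  have m1: "A0 * RD \<le> A0 * Rh + A0 * Rb" using RDle A0
    by (metis distrib_left less_trans mult_left_mono order.strict_implies_order zero_less_one)
  have m2: "(A0 - 1) * RD = A0 * RD - RD" by (simp add: algebra_simps)
  have m3: "A0 * (Rb - Rh) = A0 * Rb - A0 * Rh" by (simp add: algebra_simps)
  show ?thesis unfolding d1 d2 d3 RD_def[symmetric] Rb_def[symmetric] m2
    using iden foc ERD m1 m3 by linarith
qed


theorem corollary1:
  fixes M :: "'w measure" and n p :: nat and X :: "nat \<Rightarrow> real ^ 'd"
    and S :: "nat \<Rightarrow> 'd set" and G :: "nat \<Rightarrow> (real ^ 'd \<Rightarrow> real) set"
    and Fn :: "nat \<Rightarrow> (real ^ 'd \<Rightarrow> real) \<Rightarrow> real"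
    and gstar :: "real ^ 'd \<Rightarrow> real" and e :: "nat \<Rightarrow> 'w \<Rightarrow> real"
    and D0 D1 C1 eps A0 :: real and w :: "nat \<Rightarrow> real" and psi :: "nat \<Rightarrow> real \<Rightarrow> real"
    and gbar :: "nat \<Rightarrow> real ^ 'd \<Rightarrow> real"
  assumes M: "prob_space M"
    and n: "n > 0" and p: "p > 0"
    and G: "\<forall>j<p. fun_subspace (G j) \<and> seminorm_on (G j) (Fn j)
                  \<and> (\<forall>g\<in>G j. depends_only_on (S j) g)"
    and e_meas: "\<forall>i<n. e i \<in> borel_measurable M"
    and e_indep: "prob_space.indep_vars M (\<lambda>_. borel) e {..<n}"
    and e_mean: "\<forall>i<n. integrable M (e i) \<and> (\<integral>\<omega>. e i \<omega> \<partial>M) = 0"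
    and D0: "D0 > 0"
    and subgauss: "\<forall>i<n. integrable M (\<lambda>\<omega>. exp ((e i \<omega>)\<^sup>2 / D0))
                       \<and> D0 * (\<integral>\<omega>. exp ((e i \<omega>)\<^sup>2 / D0) \<partial>M) \<le> D1"
    and C1: "C1 > 0" "sub_gaussian_concentration M n X e C1"
    and entropy: "\<forall>j<p. \<forall>\<delta>. 0 < \<delta> \<and> \<delta> \<le> 1 \<longrightarrow>
        real_ge_integral (psi j \<delta>)
          (entropy_integral (emp_dist n X) \<delta> (local_class n X (G j) (Fn j) \<delta>))"
    and eps: "0 < eps" "eps < 1"
    and w: "\<forall>j<p. 0 < w j \<and> w j \<le> 1"
    and A0: "A0 > 1"
    and gbar: "\<forall>j<p. gbar j \<in> G j"
  shows "\<exists>A\<in>sets M. measure M A \<ge> 1 - eps \<and>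
    (\<forall>\<omega>\<in>A. \<forall>gh :: nat \<Rightarrow> real ^ 'd \<Rightarrow> real.
      let lam = tune_lambda n p eps C1 psi w;
          rho = tune_rho n p eps C1 psi w;
          Y = (\<lambda>i. gstar (X i) + e i \<omega>);
          K = (\<lambda>gs. emp_loss n X Y (add_fun p gs) / 2 + A0 * penalty n X p Fn lam rho gs)
      in ((\<forall>j<p. gh j \<in> G j) \<and> (\<forall>gs. (\<forall>j<p. gs j \<in> G j) \<longrightarrow> K gh \<le> K gs)) \<longrightarrow>
         (emp_dist n X (add_fun p gh) gstar)\<^sup>2 / 2
         + (emp_dist n X (add_fun p gh) (add_fun p gbar))\<^sup>2 / 2
         + (A0 - 1) * penalty n X p Fn lam rho (\<lambda>j x. gh j x - gbar j x)
         \<le> (emp_dist n X (add_fun p gbar) gstar)\<^sup>2 / 2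
           + 2 * A0 * penalty n X p Fn lam rho gbar)"
proof -
  interpret P: prob_space M by (rule M)
  define lam where "lam = tune_lambda n p eps C1 psi w"
  define rho where "rho = tune_rho n p eps C1 psi w"
  define t where "t = ln (real p / eps)"
  have pe: "real p / eps > 1" using p eps by (simp add: field_simps)
  then have tpos: "t > 0" unfolding t_def by simp
  have expt: "exp (- t) = eps / real p"
    unfolding t_def using pe eps p by (simp add: exp_minus)
  have nr: "real n > 0" using n by simp
  define B where "B j = {\<omega> \<in> space M. \<exists>f\<in>local_class n X (G j) (Fn j) (w j).
      \<bar>emp_inner n X (\<lambda>i. e i \<omega>) f\<bar> / C1 > psi j (w j) / sqrt (real n) + w j * sqrt (t / real n)}" for j
  have Bm: "B j \<in> sets M" for j
    unfolding B_def emp_inner_def using e_meas n C1(1)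
    by (intro meas_event) auto
  have Bp: "measure M (B j) \<le> eps / real p" if j: "j < p" for j
  proof -
    have wj: "0 < w j" "w j \<le> 1" using w j by auto
    have Fb: "\<forall>f\<in>local_class n X (G j) (Fn j) (w j). emp_norm n X f \<le> w j"
    proof
      fix f assume f: "f \<in> local_class n X (G j) (Fn j) (w j)"
      then have "f \<in> G j" "Fn j f + emp_norm n X f / w j \<le> 1" unfolding local_class_def by auto
      moreover have "Fn j f \<ge> 0" using G j calculation(1) by (auto intro: sn_nonneg)
      ultimately have "emp_norm n X f / w j \<le> 1" by linarith
      then show "emp_norm n X f \<le> w j" using wj by (simp add: divide_le_eq)
    qed
    have "measure M (B j) \<le> exp (- t)"
      using C1(2) wj Fb entropy j tpos unfolding sub_gaussian_concentration_def B_def by blast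
    then show ?thesis using expt by simp
  qed
  define A where "A = space M - (\<Union>j\<in>{..<p}. B j)"
  have UB: "(\<Union>j\<in>{..<p}. B j) \<in> sets M" using Bm by auto
  have Am: "A \<in> sets M" unfolding A_def using UB by auto
  have "measure M (\<Union>j\<in>{..<p}. B j) \<le> (\<Sum>j<p. measure M (B j))"
    using Bm by (intro P.finite_measure_subadditive_finite) auto
  also have "\<dots> \<le> (\<Sum>j<p. eps / real p)" using Bp by (intro sum_mono) auto
  also have "\<dots> = eps" using p by simp
  finally have "measure M A \<ge> 1 - eps" unfolding A_def using P.prob_compl[OF UB] by simp
  moreover have "\<forall>\<omega>\<in>A. \<forall>gh :: nat \<Rightarrow> real ^ 'd \<Rightarrow> real.
      let lam = tune_lambda n p eps C1 psi w;
          rho = tune_rho n p eps C1 psi w;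
          Y = (\<lambda>i. gstar (X i) + e i \<omega>);
          K = (\<lambda>gs. emp_loss n X Y (add_fun p gs) / 2 + A0 * penalty n X p Fn lam rho gs)
      in ((\<forall>j<p. gh j \<in> G j) \<and> (\<forall>gs. (\<forall>j<p. gs j \<in> G j) \<longrightarrow> K gh \<le> K gs)) \<longrightarrow>
         (emp_dist n X (add_fun p gh) gstar)\<^sup>2 / 2
         + (emp_dist n X (add_fun p gh) (add_fun p gbar))\<^sup>2 / 2
         + (A0 - 1) * penalty n X p Fn lam rho (\<lambda>j x. gh j x - gbar j x)
         \<le> (emp_dist n X (add_fun p gbar) gstar)\<^sup>2 / 2
           + 2 * A0 * penalty n X p Fn lam rho gbar"
  proof (intro ballI allI)
    fix \<omega> and gh :: "nat \<Rightarrow> real ^ 'd \<Rightarrow> real"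
    assume \<omega>: "\<omega> \<in> A"
    have psinn: "psi j (w j) \<ge> 0" if "j < p" for j
      using entropy w that unfolding real_ge_integral_def by blast
    have lamnn: "\<forall>j<p. lam j \<ge> 0"
    proof (intro allI impI)
      fix j assume j: "j < p"
      have "psi j (w j) / (sqrt (real n) * w j) \<ge> 0" using psinn[OF j] w j n by (intro divide_nonneg_pos mult_pos_pos) auto
      moreover have "sqrt (ln (real p / eps) / real n) \<ge> 0" using pe by simp
      ultimately show "lam j \<ge> 0" unfolding lam_def tune_lambda_def using C1(1) by simp
    qed
    have rhonn: "\<forall>j<p. rho j \<ge> 0"
      using lamnn w unfolding rho_def tune_rho_def lam_def by (simp add: less_imp_le)
    have noise: "\<forall>j<p. \<forall>f\<in>G j. \<bar>emp_inner n X (\<lambda>i. e i \<omega>) f\<bar> \<le> rho j * Fn j f + lam j * emp_norm n X f"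
    proof (intro allI impI ballI)
      fix j f assume j: "j < p" and f: "f \<in> G j"
      have "\<omega> \<notin> B j" using \<omega> j unfolding A_def by auto
      moreover have "\<omega> \<in> space M" using \<omega> unfolding A_def by auto
      ultimately have H: "\<forall>h\<in>local_class n X (G j) (Fn j) (w j).
          \<bar>emp_inner n X (\<lambda>i. e i \<omega>) h\<bar> / C1 \<le> psi j (w j) / sqrt (real n) + w j * sqrt (t / real n)"
        unfolding B_def by auto
      show "\<bar>emp_inner n X (\<lambda>i. e i \<omega>) f\<bar> \<le> rho j * Fn j f + lam j * emp_norm n X f"
        using noise_bound[OF n C1(1) _ _ _ f H] G w j
        unfolding rho_def lam_def tune_rho_def tune_lambda_def t_def by auto
    qed
    show "let lam = tune_lambda n p eps C1 psi w;
          rho = tune_rho n p eps C1 psi w;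
          Y = (\<lambda>i. gstar (X i) + e i \<omega>);
          K = (\<lambda>gs. emp_loss n X Y (add_fun p gs) / 2 + A0 * penalty n X p Fn lam rho gs)
      in ((\<forall>j<p. gh j \<in> G j) \<and> (\<forall>gs. (\<forall>j<p. gs j \<in> G j) \<longrightarrow> K gh \<le> K gs)) \<longrightarrow>
         (emp_dist n X (add_fun p gh) gstar)\<^sup>2 / 2
         + (emp_dist n X (add_fun p gh) (add_fun p gbar))\<^sup>2 / 2
         + (A0 - 1) * penalty n X p Fn lam rho (\<lambda>j x. gh j x - gbar j x)
         \<le> (emp_dist n X (add_fun p gbar) gstar)\<^sup>2 / 2
           + 2 * A0 * penalty n X p Fn lam rho gbar"
      unfolding Let_def lam_def[symmetric] rho_def[symmetric]
    proof (intro impI, elim conjE)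
      assume gh: "\<forall>j<p. gh j \<in> G j"
        and opt: "\<forall>gs. (\<forall>j<p. gs j \<in> G j) \<longrightarrow>
          emp_loss n X (\<lambda>i. gstar (X i) + e i \<omega>) (add_fun p gh) / 2 + A0 * penalty n X p Fn lam rho gh
          \<le> emp_loss n X (\<lambda>i. gstar (X i) + e i \<omega>) (add_fun p gs) / 2 + A0 * penalty n X p Fn lam rho gs"
      show "(emp_dist n X (add_fun p gh) gstar)\<^sup>2 / 2
         + (emp_dist n X (add_fun p gh) (add_fun p gbar))\<^sup>2 / 2
         + (A0 - 1) * penalty n X p Fn lam rho (\<lambda>j x. gh j x - gbar j x)
         \<le> (emp_dist n X (add_fun p gbar) gstar)\<^sup>2 / 2
           + 2 * A0 * penalty n X p Fn lam rho gbar"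
        by (rule det[OF n _ gbar gh lamnn rhonn A0 noise refl refl]) (use G opt in auto)
    qed
  qed
  ultimately show ?thesis using Am by blast
qed

end
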